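(* Let $S$ be a ring, let $n>1$ be an integer and let $R,B_1,\ldots,B_n$ be subrings of $S$. Assume that every $B_i$ is integrally closed in $S$ except at most two of them. If $R\subseteq B_1\cup\cdots\cup B_n$, then $R\subseteq B_i$ for some $i\in\{1,\ldots,n\}$.
   Context: All rings are commutative with identity; subrings share the identity of $S$. A subring $B$ of $S$ is integrally closed in $S$ if every element of $S$ integral over $B$ lies in $B$. *)

theory Defs
  imports "HOL-Computational_Algebra.Polynomial"
begin

definition subring :: "'a::comm_ring_1 set \<Rightarrow> bool" where
  "subring A \<longleftrightarrow> 0 \<in> A \<and> 1 \<in> A \<and>
     (\<forall>x\<in>A. \<forall>y\<in>A. x + y \<in> A \<and> x - y \<in> A \<and> x * y \<in> A)"

definition integral_over :: "'a::comm_ring_1 set \<Rightarrow> 'a \<Rightarrow> bool" where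
  "integral_over B s \<longleftrightarrow>
     (\<exists>p :: 'a poly. lead_coeff p = 1 \<and> (\<forall>i. coeff p i \<in> B) \<and> poly p s = 0)"

definition integrally_closed :: "'a::comm_ring_1 set \<Rightarrow> bool" where
  "integrally_closed B \<longleftrightarrow> (\<forall>s. integral_over B s \<longrightarrow> s \<in> B)"

end

theory Submission
  imports Defs
begin

lemma subring_pow: "subring A \<Longrightarrow> x \<in> A \<Longrightarrow> x ^ k \<in> A"
  by (induction k) (auto simp: subring_def)

lemma subring_neg: "subring A \<Longrightarrow> x \<in> A \<Longrightarrow> - x \<in> A"
  unfolding subring_def by (metis diff_0)

lemma integral_aux:
  fixes x :: "'a::comm_ring_1"
  assumes B: "subring B" and c: "c \<in> B" and d: "d \<in> B" and k: "1 \<le> k" "k < l"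
    and eq: "x ^ l - x ^ k + d * x = c"
  shows "integral_over B x"
proof (cases "(1::'a) = 0")
  case True
  have "0 \<in> B" using B by (simp add: subring_def)
  then show ?thesis unfolding integral_over_def
    by (intro exI[of _ 0]) (simp add: True)
next
  case False
  define q where "q = monom (-1) k + monom d 1 + monom (-c) 0"
  define p where "p = q + monom 1 l"
  have dq: "degree q < l"
  proof -
    have "degree q \<le> max (degree (monom (-1::'a) k + monom d 1)) (degree (monom (-c) 0))"
      unfolding q_def by (rule degree_add_le_max)
    moreover have "degree (monom (-1::'a) k + monom d 1) \<le> max (degree (monom (-1::'a) k)) (degree (monom d 1))"
      by (rule degree_add_le_max)
    moreover have "degree (monom (-1::'a) k) \<le> k" "degree (monom d 1) \<le> 1" "degree (monom (-c) 0) \<le> 0"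
      by (rule degree_monom_le)+
    ultimately show ?thesis using k by linarith
  qed
  have dm: "degree (monom (1::'a) l) = l" using False by (simp add: degree_monom_eq)
  have lc: "lead_coeff p = 1" unfolding p_def
    using lead_coeff_add_le[of q "monom 1 l"] dq dm by simp
  have m1: "-1 \<in> B" using B by (simp add: subring_def subring_neg)
  have mc: "-c \<in> B" using B c by (rule subring_neg)
  have z: "0 \<in> B" and o: "1 \<in> B" using B by (auto simp: subring_def)
  have add: "\<And>a b. a \<in> B \<Longrightarrow> b \<in> B \<Longrightarrow> a + b \<in> B" using B by (auto simp: subring_def)
  have co: "\<forall>i. coeff p i \<in> B"
    unfolding p_def q_def using m1 mc z o d k B by (auto intro!: add simp: subring_def)
  have "poly p x = 0" unfolding p_def q_def using eq
    by (simp add: poly_monom algebra_simps)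
  then show ?thesis unfolding integral_over_def using lc co by blast
qed

lemma core:
  fixes B :: "nat \<Rightarrow> 'a::comm_ring_1 set"
  assumes fin: "finite I" and cl: "\<forall>i\<in>I. subring (B i) \<and> integrally_closed (B i)"
    and xn: "\<forall>i\<in>I. x \<notin> B i"
    and e: "\<forall>k. e k = 0 \<or> e k = 1"
    and S: "\<forall>k\<in>{1..card I + 1}. \<exists>i\<in>I. y + x^k + e k * x \<in> B i"
  shows False
proof -
  obtain f where f: "\<forall>k\<in>{1..card I + 1}. f k \<in> I \<and> y + x^k + e k * x \<in> B (f k)"
    using S by metis
  have "\<not> inj_on f {1..card I + 1}"
  proof
    assume "inj_on f {1..card I + 1}"
    then have "card {1..card I + 1} \<le> card I"
      using card_inj_on_le[of f "{1..card I + 1}" I] f fin by auto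
    then show False by simp
  qed
  then obtain k l where kl: "k \<in> {1..card I + 1}" "l \<in> {1..card I + 1}" "k \<noteq> l" "f k = f l"
    unfolding inj_on_def by blast
  have main: "False" if k: "k \<in> {1..card I + 1}" and l: "l \<in> {1..card I + 1}" and lt: "k < l"
    and fkl: "f k = f l" for k l
  proof -
    let ?j = "f k"
    have j: "?j \<in> I" using f k by blast
    have Bj: "subring (B ?j)" "integrally_closed (B ?j)" using cl j by auto
    have s1: "y + x^k + e k * x \<in> B ?j" using f k by blast
    have "y + x^l + e l * x \<in> B (f l)" using f l by blast
    then have s2: "y + x^l + e l * x \<in> B ?j" using fkl by simp
    have c: "(y + x^l + e l * x) - (y + x^k + e k * x) \<in> B ?j"
      using Bj(1) s1 s2 unfolding subring_def by blast
    have 01: "0 \<in> B ?j" "1 \<in> B ?j" using Bj(1) by (auto simp: subring_def)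
    have d: "e l - e k \<in> B ?j"
      using e[rule_format, of l] e[rule_format, of k] 01 Bj(1) by (auto simp: subring_def)
    have "integral_over (B ?j) x"
      by (rule integral_aux[OF Bj(1) c d, of k l]) (use k lt in \<open>auto simp: algebra_simps\<close>)
    then have "x \<in> B ?j" using Bj(2) by (simp add: integrally_closed_def)
    then show False using xn j by blast
  qed
  show False
  proof (cases "k < l")
    case True then show ?thesis using main kl by blast
  next
    case False then have "l < k" using kl by simp
    then show ?thesis using main kl by metis
  qed
qed

lemma lemA:
  fixes B :: "nat \<Rightarrow> 'a::comm_ring_1 set"
  assumes "finite I"
  shows "\<forall>i\<in>I. subring (B i) \<and> integrally_closed (B i) \<Longrightarrow> subring D \<Longrightarrow> subring R \<Longrightarrow>
    R \<subseteq> D \<union> (\<Union>i\<in>I. B i) \<Longrightarrow> R \<subseteq> D \<or> (\<exists>i\<in>I. R \<subseteq> B i)"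
  using assms
proof (induction I arbitrary: D rule: finite_induct)
  case empty
  then show ?case by simp
next
  case (insert a F)
  show ?case
  proof (cases "R \<subseteq> B a \<union> (\<Union>i\<in>F. B i)")
    case True
    have "R \<subseteq> B a \<or> (\<exists>i\<in>F. R \<subseteq> B i)"
      using insert.IH[of "B a"] insert.prems True by auto
    then show ?thesis by auto
  next
    case False
    then obtain x where x: "x \<in> R" "\<forall>i\<in>insert a F. x \<notin> B i" by auto
    then have xD: "x \<in> D" using insert.prems(4) by auto
    show ?thesis
    proof (cases "R \<subseteq> D")
      case True then show ?thesis by simp
    next
      case False
      then obtain y where y: "y \<in> R" "y \<notin> D" by auto
      have "False"
      proof (rule core[of "insert a F" B x "\<lambda>_. 0" y])
        show "finite (insert a F)" using insert by simp
        show "\<forall>i\<in>insert a F. subring (B i) \<and> integrally_closed (B i)" using insert.prems by blast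
        show "\<forall>i\<in>insert a F. x \<notin> B i" using x by blast
        show "\<forall>k. (0::'a) = 0 \<or> (0::'a) = 1" by simp
        show "\<forall>k\<in>{1..card (insert a F) + 1}. \<exists>i\<in>insert a F. y + x ^ k + 0 * x \<in> B i"
        proof
          fix k
          have inR: "y + x^k \<in> R" using insert.prems(3) x y subring_pow[of R x k]
            by (simp add: subring_def)
          have "y + x^k \<notin> D"
          proof
            assume "y + x^k \<in> D"
            moreover have "x^k \<in> D" using subring_pow[OF insert.prems(2) xD, of k] .
            ultimately have "(y + x^k) - x^k \<in> D" using insert.prems(2)
              unfolding subring_def by blast
            then show False using y by simp
          qed
          then show "\<exists>i\<in>insert a F. y + x ^ k + 0 * x \<in> B i" using inR insert.prems(4) by auto
        qed
      qed
      then show ?thesis by simp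
    qed
  qed
qed

lemma lemB:
  fixes B :: "nat \<Rightarrow> 'a::comm_ring_1 set"
  assumes fin: "finite I" and cl: "\<forall>i\<in>I. subring (B i) \<and> integrally_closed (B i)"
    and D1: "subring D1" and D2: "subring D2" and R: "subring R"
    and cov: "R \<subseteq> D1 \<union> D2 \<union> (\<Union>i\<in>I. B i)"
  shows "R \<subseteq> D1 \<or> R \<subseteq> D2 \<or> (\<exists>i\<in>I. R \<subseteq> B i)"
proof (cases "R \<subseteq> D2 \<union> (\<Union>i\<in>I. B i)")
  case True
  then show ?thesis using lemA[OF fin cl D2 R] by blast
next
  case nx: False
  show ?thesis
  proof (cases "R \<inter> D2 \<subseteq> D1")
    case True
    then have "R \<subseteq> D1 \<union> (\<Union>i\<in>I. B i)" using cov by blast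
    then show ?thesis using lemA[OF fin cl D1 R] by blast
  next
    case False
    then obtain y where y: "y \<in> R" "y \<in> D2" "y \<notin> D1" by auto
    from nx obtain x where x: "x \<in> R" "x \<notin> D2" "\<forall>i\<in>I. x \<notin> B i" by auto
    then have xD: "x \<in> D1" using cov by auto
    define e where "e k = (if x^k \<in> D2 then (1::'a) else 0)" for k
    have False
    proof (rule core[OF fin cl x(3), of e y])
      show "\<forall>k. e k = 0 \<or> e k = 1" by (simp add: e_def)
      show "\<forall>k\<in>{1..card I + 1}. \<exists>i\<in>I. y + x ^ k + e k * x \<in> B i"
      proof
        fix k
        have xk1: "x^k \<in> D1" using subring_pow[OF D1 xD] .
        have ek: "e k \<in> D1" using D1 by (simp add: e_def subring_def)
        have inR: "y + x^k + e k * x \<in> R"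
          using R x y subring_pow[OF R x(1), of k] by (auto simp: e_def subring_def)
        have n1: "y + x^k + e k * x \<notin> D1"
        proof
          assume h: "y + x^k + e k * x \<in> D1"
          have "e k * x \<in> D1" using ek xD D1 by (simp add: subring_def)
          then have "(y + x^k + e k * x) - x^k - e k * x \<in> D1" using h xk1 D1
            unfolding subring_def by blast
          then show False using y by simp
        qed
        have n2: "y + x^k + e k * x \<notin> D2"
        proof
          assume h: "y + x^k + e k * x \<in> D2"
          show False
          proof (cases "x^k \<in> D2")
            case True
            then have "y + x^k + x \<in> D2" using h by (simp add: e_def)
            then have "(y + x^k + x) - y - x^k \<in> D2" using True y D2 unfolding subring_def by blast
            then show False using x by simp
          next
            case False
            then have "y + x^k \<in> D2" using h by (simp add: e_def)
            then have "(y + x^k) - y \<in> D2" using y D2 unfolding subring_def by blast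
            then show False using False by simp
          qed
        qed
        show "\<exists>i\<in>I. y + x ^ k + e k * x \<in> B i" using inR n1 n2 cov by blast
      qed
    qed
    then show ?thesis by simp
  qed
qed

theorem mainTheorem2:
  fixes R :: "'a::comm_ring_1 set" and B :: "nat \<Rightarrow> 'a set" and n :: nat
  assumes "n > 1"
    and "subring R"
    and "\<forall>i\<in>{1..n}. subring (B i)"
    and "card {i\<in>{1..n}. \<not> integrally_closed (B i)} \<le> 2"
    and "R \<subseteq> (\<Union>i\<in>{1..n}. B i)"
  shows "\<exists>i\<in>{1..n}. R \<subseteq> B i"
proof -
  let ?N = "{i\<in>{1..n}. \<not> integrally_closed (B i)}"
  have finN: "finite ?N" by simp
  obtain a b where ab: "a \<in> {1..n}" "b \<in> {1..n}" "?N \<subseteq> {a, b}"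
  proof (cases "?N = {}")
    case True then show ?thesis using that[of 1 1] assms(1) by auto
  next
    case False
    then obtain a where a: "a \<in> ?N" by blast
    show ?thesis
    proof (cases "?N - {a} = {}")
      case True then show ?thesis using that[of a a] a by auto
    next
      case False
      then obtain b where b: "b \<in> ?N - {a}" by blast
      have "?N = {a, b} \<union> (?N - {a, b})" using a b by auto
      have "card {a, b} = 2" using b by auto
      have "?N - {a,b} = {}"
      proof (rule ccontr)
        assume "?N - {a,b} \<noteq> {}"
        then obtain c where c: "c \<in> ?N" "c \<noteq> a" "c \<noteq> b" by blast
        have "{a,b,c} \<subseteq> ?N" using a b c by auto
        then have "card {a,b,c} \<le> card ?N" using finN by (rule card_mono[rotated])
        moreover have "card {a,b,c} = 3" using b c by auto
        ultimately show False using assms(4) by simp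
      qed
      then show ?thesis using that[of a b] a b by auto
    qed
  qed
  define I where "I = {1..n} - {a, b}"
  have fin: "finite I" by (simp add: I_def)
  have cl: "\<forall>i\<in>I. subring (B i) \<and> integrally_closed (B i)"
    using assms(3) ab(3) by (auto simp: I_def)
  have cov: "R \<subseteq> B a \<union> B b \<union> (\<Union>i\<in>I. B i)" using assms(5) by (auto simp: I_def)
  have "R \<subseteq> B a \<or> R \<subseteq> B b \<or> (\<exists>i\<in>I. R \<subseteq> B i)"
    using lemB[OF fin cl _ _ assms(2) cov] assms(3) ab by auto
  then show ?thesis using ab by (auto simp: I_def)
qed

end
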